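(* Let $\mathcal D$ be an ordered, oriented Descartes configuration and consider the orbit $\mathcal A^\perp(\mathcal D)=\{\mathcal D':\mathbf W_{\mathcal D'}=\mathbf U\mathbf W_{\mathcal D},\ \mathbf U\in\mathcal A^\perp\}$. Let $\mathcal P^\perp_{\mathcal D}$ be the set of all circles (as unoriented point sets in $\hat{\mathbb C}$) occurring in configurations of this orbit. Then no two circles of $\mathcal P^\perp_{\mathcal D}$ cross: any two circles in $\mathcal P^\perp_{\mathcal D}$ either coincide, or are tangent (meet in exactly one point), or are disjoint.
   Context: Oriented circles/lines and oriented Descartes configurations: four mutually tangent oriented circles/lines with six distinct tangency points whose interiors are pairwise disjoint or become so after reversing all orientations (interior of a positively curved circle is the open disk, of a negatively curved one the open exterior, of a line the half-plane its unit normal points into). Augmented curvature-center coordinates: for center $\mathbf c$, oriented radius $r$: $\mathbf w(C)=((|\mathbf c|^2-r^2)/r,1/r,c_1/r,c_2/r)$; for the line $\mathbf x\cdot\mathbf h=m$ with interior-pointing unit normal $\mathbf h$: $(2m,0,h_1,h_2)$; $\mathbf W_{\mathcal D}$ has rows $\mathbf w(C_k)$. Known fact: $\mathcal D\mapsto\mathbf W_{\mathcal D}$ is a bijection onto $\{\mathbf W:\mathbf W^T\mathbf Q_D\mathbf W=\mathbf Q_W\}$ with $\mathbf Q_D=\mathbf I-\frac12\mathbf 1\mathbf 1^T$, $\mathbf Q_W=\begin{pmatrix}0&-4&0&0\\-4&0&0&0\\0&0&2&0\\0&0&0&2\end{pmatrix}$. The dual Apollonian group is $\mathcal A^\perp=\langle\mathbf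 S_1^\perp,\dots,\mathbf S_4^\perp\rangle$, where $\mathbf S_i^\perp$ agrees with the $4\times 4$ identity except in column $i$, which has $-1$ in position $i$ and $2$ in the other three positions (e.g. $\mathbf S_1^\perp$ has first column $(-1,2,2,2)^T$); these matrices preserve $\mathbf Q_D$. *)

theory Defs
  imports "HOL-Analysis.Analysis"
begin

text \<open>Circ c r : circle with center c and oriented radius r (r \<noteq> 0);
             positive r: interior is the open disk, negative r: the open exterior.
  Line h m : the line {x. x\<cdot>h = m} with unit normal h pointing into its interior.\<close>
datatype ocircle = Circ complex real | Line complex real

definition dotc :: "complex \<Rightarrow> complex \<Rightarrow> real" where
  "dotc x y = Re x * Re y + Im x * Im y"

fun valid_oc :: "ocircle \<Rightarrow> bool" where
  "valid_oc (Circ c r) = (r \<noteq> 0)"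
| "valid_oc (Line h m) = (cmod h = 1)"

text \<open>Points of the extended plane: None is the point at infinity.\<close>
type_synonym ecomplex = "complex option"

fun pts :: "ocircle \<Rightarrow> ecomplex set" where
  "pts (Circ c r) = Some ` {z. cmod (z - c) = \<bar>r\<bar>}"
| "pts (Line h m) = insert None (Some ` {z. dotc z h = m})"

fun interior_oc :: "ocircle \<Rightarrow> complex set" where
  "interior_oc (Circ c r) = (if r > 0 then {z. cmod (z - c) < r} else {z. cmod (z - c) > - r})"
| "interior_oc (Line h m) = {z. dotc z h > m}"

fun reverse_oc :: "ocircle \<Rightarrow> ocircle" where
  "reverse_oc (Circ c r) = Circ c (- r)"
| "reverse_oc (Line h m) = Line (- h) (- m)"

definition tangent_oc :: "ocircle \<Rightarrow> ocircle \<Rightarrow> bool" where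
  "tangent_oc C C' \<longleftrightarrow> (\<exists>!z. z \<in> pts C \<inter> pts C')"

definition tpoint :: "ocircle \<Rightarrow> ocircle \<Rightarrow> ecomplex" where
  "tpoint C C' = (THE z. z \<in> pts C \<inter> pts C')"

definition descartes :: "(4 \<Rightarrow> ocircle) \<Rightarrow> bool" where
  "descartes D \<longleftrightarrow>
     (\<forall>i. valid_oc (D i)) \<and>
     (\<forall>i j. i \<noteq> j \<longrightarrow> tangent_oc (D i) (D j)) \<and>
     (\<forall>i j k l. i \<noteq> j \<longrightarrow> k \<noteq> l \<longrightarrow> {i, j} \<noteq> {k, l} \<longrightarrow>
         tpoint (D i) (D j) \<noteq> tpoint (D k) (D l)) \<and>
     ((\<forall>i j. i \<noteq> j \<longrightarrow> interior_oc (D i) \<inter> interior_oc (D j) = {}) \<or>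
      (\<forall>i j. i \<noteq> j \<longrightarrow> interior_oc (reverse_oc (D i)) \<inter> interior_oc (reverse_oc (D j)) = {}))"

fun acc :: "ocircle \<Rightarrow> real ^ 4" where
  "acc (Circ c r) = vector [((cmod c)\<^sup>2 - r\<^sup>2) / r, 1 / r, Re c / r, Im c / r]"
| "acc (Line h m) = vector [2 * m, 0, Re h, Im h]"

definition Wmat :: "(4 \<Rightarrow> ocircle) \<Rightarrow> real ^ 4 ^ 4" where
  "Wmat D = (\<chi> k. acc (D k))"

definition Sperp :: "4 \<Rightarrow> real ^ 4 ^ 4" where
  "Sperp i = (\<chi> a b. if b = i then (if a = i then -1 else 2) else (if a = b then 1 else 0))"

inductive_set dual_apollonian :: "(real ^ 4 ^ 4) set" where
  gen: "Sperp i \<in> dual_apollonian"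
| one: "mat 1 \<in> dual_apollonian"
| mult: "U \<in> dual_apollonian \<Longrightarrow> V \<in> dual_apollonian \<Longrightarrow> U ** V \<in> dual_apollonian"
| inv: "U \<in> dual_apollonian \<Longrightarrow> matrix_inv U \<in> dual_apollonian"

definition orbit_dual :: "(4 \<Rightarrow> ocircle) \<Rightarrow> (4 \<Rightarrow> ocircle) set" where
  "orbit_dual D = {D'. descartes D' \<and> (\<exists>U \<in> dual_apollonian. Wmat D' = U ** Wmat D)}"

definition packing_dual :: "(4 \<Rightarrow> ocircle) \<Rightarrow> ecomplex set set" where
  "packing_dual D = {pts (D' k) | D' k. D' \<in> orbit_dual D}"

end

theory Submission
  imports Defs
begin


definition P :: "real^4^4 \<Rightarrow> bool" where
  "P U \<longleftrightarrow> (\<forall>a b. (U$a$b - (if a = b then 1 else 0)) / 2 \<in> \<int>)"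

definition intm :: "real^4^4 \<Rightarrow> bool" where
  "intm M \<longleftrightarrow> (\<forall>a b. M$a$b \<in> \<int>)"

lemma P_mult_even:
  assumes "P U" "intm M"
  shows "((U ** M)$a$b - M$a$b) / 2 \<in> \<int>"
proof -
  have "(U ** M)$a$b = (\<Sum>c\<in>UNIV. U$a$c * M$c$b)" by (simp add: matrix_matrix_mult_def)
  also have "\<dots> = (\<Sum>c\<in>UNIV. (U$a$c - (if a = c then 1 else 0)) * M$c$b) + (\<Sum>c\<in>UNIV. (if a = c then 1 else 0) * M$c$b)"
    by (simp add: sum.distrib[symmetric] algebra_simps)
  also have "(\<Sum>c\<in>UNIV. (if a = c then 1 else 0) * M$c$b) = (\<Sum>c\<in>UNIV. if a = c then M$c$b else 0)"
    by (rule sum.cong) auto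
  also have "\<dots> = M$a$b" by simp
  finally have "((U ** M)$a$b - M$a$b) / 2 = (\<Sum>c\<in>UNIV. ((U$a$c - (if a = c then 1 else 0)) / 2) * M$c$b)"
    by (simp add: sum_divide_distrib)
  also have "\<dots> \<in> \<int>"
    using assms unfolding P_def intm_def by (intro Ints_sum Ints_mult) auto
  finally show ?thesis .
qed

lemma P_intm: "P U \<Longrightarrow> intm U"
proof (unfold intm_def, intro allI)
  fix a b assume "P U"
  then have "(U$a$b - (if a = b then 1 else 0)) / 2 \<in> \<int>" unfolding P_def by auto
  then have "2 * ((U$a$b - (if a = b then 1 else 0)) / 2) + (if a = b then 1 else 0) \<in> \<int>"
    by (intro Ints_add Ints_mult) auto
  moreover have "2 * ((U$a$b - (if a = b then 1 else 0)) / 2) + (if a = b then 1 else 0) = U$a$b" by (simp add: field_simps)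
  ultimately show "U$a$b \<in> \<int>" by metis
qed

lemma P_mult: assumes "P U" "P V" shows "P (U ** V)"
  unfolding P_def
proof (intro allI)
  fix a b
  have e: "((U ** V)$a$b - V$a$b) / 2 \<in> \<int>" using P_mult_even assms P_intm by blast
  have f: "(V$a$b - (if a = b then 1 else 0)) / 2 \<in> \<int>" using assms unfolding P_def by auto
  have "((U ** V)$a$b - (if a = b then 1 else 0)) / 2 = ((U ** V)$a$b - V$a$b) / 2 + (V$a$b - (if a = b then 1 else 0)) / 2"
    by (simp add: field_simps)
  also have "\<dots> \<in> \<int>" using e f by (rule Ints_add)
  finally show "((U ** V)$a$b - (if a = b then 1 else 0)) / 2 \<in> \<int>" .
qed

definition oddm :: "real^4^4 \<Rightarrow> bool" where
  "oddm M \<longleftrightarrow> (\<forall>a b. (M$a$b - 1) / 2 \<in> \<int>)"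

lemma oddm_intm: "oddm M \<Longrightarrow> intm M"
proof (unfold intm_def, intro allI)
  fix a b assume "oddm M"
  then have "(M$a$b - 1) / 2 \<in> \<int>" unfolding oddm_def by auto
  then have "2 * ((M$a$b - 1) / 2) + 1 \<in> \<int>" by (intro Ints_add Ints_mult) auto
  moreover have "2 * ((M$a$b - 1) / 2) + 1 = M$a$b" by (simp add: field_simps)
  ultimately show "M$a$b \<in> \<int>" by metis
qed

lemma P_oddm: assumes "P U" "oddm M" shows "oddm (U ** M)"
  unfolding oddm_def
proof (intro allI)
  fix a b
  have e: "((U ** M)$a$b - M$a$b) / 2 \<in> \<int>" using P_mult_even assms oddm_intm by blast
  have f: "(M$a$b - 1) / 2 \<in> \<int>" using assms unfolding oddm_def by auto
  have "((U ** M)$a$b - 1) / 2 = ((U ** M)$a$b - M$a$b) / 2 + (M$a$b - 1) / 2"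
    by (simp add: field_simps)
  also have "\<dots> \<in> \<int>" using e f by (rule Ints_add)
  finally show "((U ** M)$a$b - 1) / 2 \<in> \<int>" .
qed

lemma P_transpose: assumes "P U" shows "P (transpose U)"
  unfolding P_def transpose_def
proof (intro allI)
  fix a b
  have "(U$b$a - (if b = a then 1 else 0))/2 \<in> \<int>" using assms P_def by blast
  moreover have "(if b = a then (1::real) else 0) = (if a = b then 1 else 0)" by auto
  ultimately show "((\<chi> i j. U $ j $ i) $ a $ b - (if a = b then 1 else 0)) / 2 \<in> \<int>" by simp
qed

lemma oddm_transpose: "oddm M \<Longrightarrow> oddm (transpose M)"
  unfolding oddm_def transpose_def by auto

lemma oddm_mult_P: assumes "oddm M" "P V" shows "oddm (M ** V)"
proof -
  have "oddm (transpose V ** transpose M)" using assms P_oddm P_transpose oddm_transpose by blast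
  then have "oddm (transpose (transpose V ** transpose M))" by (rule oddm_transpose)
  then show ?thesis by (simp add: matrix_transpose_mul)
qed

lemma P_one: "P (mat 1)" unfolding P_def by (simp add: mat_def)

lemma P_Sperp: "P (Sperp i)"
  unfolding P_def Sperp_def by auto

lemma Sperp_sq: "Sperp i ** Sperp i = mat 1"
  unfolding Sperp_def matrix_matrix_mult_def mat_def
  using exhaust_4[of i] by (auto simp add: vec_eq_iff sum_4 forall_4)

definition Inv :: "real^4^4 \<Rightarrow> bool" where
  "Inv U \<longleftrightarrow> P U \<and> (\<exists>V. P V \<and> U ** V = mat 1 \<and> V ** U = mat 1)"

lemma Inv_matrix_inv: assumes "Inv U" shows "Inv (matrix_inv U)"
proof -
  obtain V where V: "P V" "U ** V = mat 1" "V ** U = mat 1" "P U" using assms Inv_def by blast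
  have ex: "\<exists>A'. U ** A' = mat 1 \<and> A' ** U = mat 1" using V by auto
  have "U ** matrix_inv U = mat 1 \<and> matrix_inv U ** U = mat 1"
    unfolding matrix_inv_def by (rule someI_ex[OF ex])
  then have "matrix_inv U = V"
    by (metis V(2) matrix_mul_assoc matrix_mul_lid matrix_mul_rid)
  then show ?thesis using V Inv_def by auto
qed

lemma dual_Inv: "U \<in> dual_apollonian \<Longrightarrow> Inv U"
proof (induction rule: dual_apollonian.induct)
  case (gen i) then show ?case unfolding Inv_def using P_Sperp Sperp_sq by blast
next
  case one then show ?case unfolding Inv_def using P_one by auto
next
  case (mult U V)
  then obtain U' V' where "P U'" "U ** U' = mat 1" "U' ** U = mat 1" "P V'" "V ** V' = mat 1" "V' ** V = mat 1" "P U" "P V"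
    unfolding Inv_def by blast
  then show ?case unfolding Inv_def
    apply (intro conjI exI[of _ "V' ** U'"])
    using P_mult apply blast
    using P_mult apply blast
    apply (metis matrix_mul_assoc matrix_mul_rid)
    apply (metis matrix_mul_assoc matrix_mul_rid)
    done
next
  case (inv U) then show ?case using Inv_matrix_inv by blast
qed



lemma L1: "((x::real)* v1+y* v2)^2 \<le> (x^2+y^2)*(v1^2+v2^2)"
proof -
  have "(x^2+y^2)*(v1^2+v2^2) - (x* v1+y* v2)^2 = (x* v2 - y* v1)^2" by algebra
  moreover have "(x* v2 - y* v1)^2 \<ge> 0" by simp
  ultimately show ?thesis by linarith
qed

lemma L2:
  fixes x y v1 v2 p d2 :: real
  assumes "d2 = v1^2+v2^2" "d2 > 0" "p = x* v1+y* v2" "p^2 = (x^2+y^2)*d2"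
  shows "x = p* v1/d2 \<and> y = p* v2/d2"
proof -
  have "(d2*x - p* v1)^2 + (d2*y - p* v2)^2 = d2*(d2*(x^2+y^2) - p^2)"
    using assms(1,3) by algebra
  also have "\<dots> = 0" using assms(4) by (simp add: algebra_simps)
  finally have "d2*x - p* v1 = 0 \<and> d2*y - p* v2 = 0" by (simp add: sum_power2_eq_zero_iff)
  then show ?thesis using assms(2) by (simp add: field_simps)
qed

lemma L3a:
  fixes x y v1 v2 p d2 a :: real
  assumes "d2 = v1^2+v2^2" "p = x * v1+y * v2" "a * d2 = 2 * p"
  shows "(a * v1 - x)^2 + (a * v2 - y)^2 = x^2+y^2"
    and "(a * v1 - x) * v1 + (a * v2 - y) * v2 = p"
  using assms by algebra+

lemma L3:
  fixes x y v1 v2 p d2 :: real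
  assumes "d2 = v1^2+v2^2" "d2 > 0" "p = x * v1+y * v2" "p^2 < (x^2+y^2) * d2"
  shows "(2 * p * v1/d2 - x)^2 + (2 * p * v2/d2 - y)^2 = x^2+y^2"
    and "(2 * p * v1/d2 - x) * v1 + (2 * p * v2/d2 - y) * v2 = p"
    and "(2 * p * v1/d2 - x, 2 * p * v2/d2 - y) \<noteq> (x, y)"
proof -
  have d: "d2 \<noteq> 0" using assms(2) by simp
  have a: "(2 * p / d2) * d2 = 2 * p" using d by simp
  have e1: "2 * p * v1/d2 = (2 * p / d2) * v1" "2 * p * v2/d2 = (2 * p / d2) * v2" by simp_all
  show "(2 * p * v1/d2 - x)^2 + (2 * p * v2/d2 - y)^2 = x^2+y^2"
    unfolding e1 using L3a(1)[OF assms(1,3) a] .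
  show "(2 * p * v1/d2 - x) * v1 + (2 * p * v2/d2 - y) * v2 = p"
    unfolding e1 using L3a(2)[OF assms(1,3) a] .
  show "(2 * p * v1/d2 - x, 2 * p * v2/d2 - y) \<noteq> (x, y)"
  proof
    assume "(2 * p * v1/d2 - x, 2 * p * v2/d2 - y) = (x, y)"
    then have "x * d2 = p * v1" "y * d2 = p * v2" using d by (auto simp: field_simps)
    then have "(x^2+y^2) * d2 * d2 = p^2 * d2" using assms(1) by algebra
    then have "(x^2+y^2) * d2 = p^2" using d by simp
    then show False using assms(4) by simp
  qed
qed



lemma vector_4 [simp]:
  "(vector [a,b,c,d] :: 'x::zero^4) $ 1 = a"
  "(vector [a,b,c,d] :: 'x::zero^4) $ 2 = b"
  "(vector [a,b,c,d] :: 'x::zero^4) $ 3 = c"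
  "(vector [a,b,c,d] :: 'x::zero^4) $ 4 = d"
  unfolding vector_def by simp_all

definition ip :: "real^4 \<Rightarrow> real^4 \<Rightarrow> real" where
  "ip x y = - (x$1 * y$2 + x$2 * y$1) / 2 + x$3 * y$3 + x$4 * y$4"

lemma ip_sym: "ip x y = ip y x" unfolding ip_def by (simp add: algebra_simps)

definition Jm :: "real^4^4" where
  "Jm = (\<chi> a b. if (a = 1 \<and> b = 2) \<or> (a = 2 \<and> b = 1) then -1/2 else if a = b \<and> (a = 3 \<or> a = 4) then 1 else 0)"

lemma Jm_ip: "(A ** Jm ** transpose B) $ k $ l = ip (A$k) (B$l)"
  unfolding Jm_def ip_def matrix_matrix_mult_def transpose_def
  by (simp add: sum_4 field_simps)

lemma cmod_sq: "(cmod w)^2 = (Re w)^2 + (Im w)^2"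
  by (simp add: cmod_power2)

lemma ip_CC: "r \<noteq> 0 \<Longrightarrow> r' \<noteq> 0 \<Longrightarrow> ip (acc (Circ c r)) (acc (Circ c' r')) =
   (r^2 + r'^2 - ((Re c' - Re c)^2 + (Im c' - Im c)^2)) / (2 * r * r')"
  unfolding ip_def by (simp add: cmod_sq field_simps) algebra

lemma ip_CL: "r \<noteq> 0 \<Longrightarrow> ip (acc (Circ c r)) (acc (Line h m)) = (Re c * Re h + Im c * Im h - m) / r"
  unfolding ip_def by (simp add: field_simps)

lemma ip_LL: "ip (acc (Line h m)) (acc (Line h' m')) = Re h * Re h' + Im h * Im h'"
  unfolding ip_def by simp

lemma ip_self: "valid_oc C \<Longrightarrow> ip (acc C) (acc C) = 1"
proof (cases C)
  case (Circ c r)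
  assume v: "valid_oc C"
  then have "r \<noteq> 0" using Circ by simp
  moreover have "(cmod c)^2 = (Re c)^2 + (Im c)^2" by (rule cmod_sq)
  ultimately show ?thesis using Circ by (simp add: ip_def field_simps) (simp add: power2_eq_square algebra_simps)
next
  case (Line h m)
  assume v: "valid_oc C"
  then have "cmod h = 1" using Line by simp
  moreover have "(cmod h)^2 = (Re h)^2 + (Im h)^2" by (rule cmod_sq)
  ultimately show ?thesis using Line by (simp add: ip_def power2_eq_square)
qed



definition SC :: "complex \<Rightarrow> real \<Rightarrow> complex set" where
  "SC c r = {z. (Re z - Re c)^2 + (Im z - Im c)^2 = r^2}"

lemma pts_C: "pts (Circ c r) = Some ` SC c r"
proof -
  have "cmod (z - c) = \<bar>r\<bar> \<longleftrightarrow> (Re z - Re c)^2 + (Im z - Im c)^2 = r^2" for z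
  proof -
    have "cmod (z - c) = \<bar>r\<bar> \<longleftrightarrow> (cmod (z - c))^2 = \<bar>r\<bar>^2"
      using power2_eq_iff_nonneg[of "cmod (z-c)" "\<bar>r\<bar>"] by simp
    also have "\<dots> \<longleftrightarrow> (Re z - Re c)^2 + (Im z - Im c)^2 = r^2" by (simp add: cmod_sq)
    finally show ?thesis .
  qed
  then show ?thesis by (simp add: SC_def)
qed

lemma CC_common:
  assumes "z \<in> SC c r" "z \<in> SC c' r'"
  defines "v1 \<equiv> Re c' - Re c" and "v2 \<equiv> Im c' - Im c"
  defines "x \<equiv> Re z - Re c" and "y \<equiv> Im z - Im c"
  shows "x^2 + y^2 = r^2" "x * v1 + y * v2 = (r^2 + (v1^2+v2^2) - r'^2) / 2"
proof -
  show a: "x^2 + y^2 = r^2" using assms(1) by (simp add: SC_def x_def y_def)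
  have b: "(x - v1)^2 + (y - v2)^2 = r'^2" using assms(2) by (simp add: SC_def x_def y_def v1_def v2_def)
  show "x * v1 + y * v2 = (r^2 + (v1^2+v2^2) - r'^2) / 2"
    using a b by (simp add: field_simps) algebra
qed

lemma CC_nc:
  fixes c c' :: complex and r r' :: real
  defines "v1 \<equiv> Re c' - Re c" and "v2 \<equiv> Im c' - Im c"
  defines "dd \<equiv> v1^2 + v2^2"
  defines "p \<equiv> (r^2 + dd - r'^2) / 2"
  assumes "p^2 \<ge> r^2 * dd"
  shows "SC c r = SC c' r' \<or> (\<exists>z0. \<forall>z \<in> SC c r \<inter> SC c' r'. z = z0)"
proof (cases "dd = 0")
  case True
  then have "v1 = 0" "v2 = 0" unfolding dd_def by (simp_all add: sum_power2_eq_zero_iff)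
  then have cc: "c' = c" unfolding v1_def v2_def by (simp add: complex_eq_iff)
  show ?thesis
  proof (cases "r^2 = r'^2")
    case True then show ?thesis using cc by (simp add: SC_def)
  next
    case False then have "SC c r \<inter> SC c' r' = {}" using cc by (auto simp: SC_def)
    then show ?thesis by auto
  qed
next
  case False
  then have dpos: "dd > 0" unfolding dd_def by (simp add: add_pos_nonneg sum_power2_gt_zero_iff)
  have "\<forall>z \<in> SC c r \<inter> SC c' r'. z = Complex (Re c + p * v1 / dd) (Im c + p * v2 / dd)"
  proof
    fix z assume z: "z \<in> SC c r \<inter> SC c' r'"
    define x where "x = Re z - Re c"
    define y where "y = Im z - Im c"
    have h1: "x^2 + y^2 = r^2" and h2: "x * v1 + y * v2 = p"
      using CC_common[of z c r c' r'] z unfolding x_def y_def v1_def v2_def p_def dd_def by auto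
    have "p^2 \<le> r^2 * dd" using L1[of x v1 y v2] h1 h2 unfolding dd_def by simp
    then have "p^2 = (x^2+y^2) * dd" using assms(5) h1 by simp
    then have "x = p * v1 / dd \<and> y = p * v2 / dd" using L2[OF dd_def[THEN meta_eq_to_obj_eq] dpos h2[symmetric]] by simp
    then show "z = Complex (Re c + p * v1 / dd) (Im c + p * v2 / dd)"
      unfolding x_def y_def by (simp add: complex_eq_iff)
  qed
  then show ?thesis by blast
qed

lemma CC_t:
  fixes c c' :: complex and r r' :: real
  defines "v1 \<equiv> Re c' - Re c" and "v2 \<equiv> Im c' - Im c"
  defines "dd \<equiv> v1^2 + v2^2"
  defines "p \<equiv> (r^2 + dd - r'^2) / 2"
  assumes "\<exists>!z. z \<in> SC c r \<inter> SC c' r'"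
  shows "p^2 = r^2 * dd"
proof -
  obtain z where z: "z \<in> SC c r \<inter> SC c' r'" and un: "\<And>w. w \<in> SC c r \<inter> SC c' r' \<Longrightarrow> w = z"
    using assms(5) by blast
  define x where "x = Re z - Re c"
  define y where "y = Im z - Im c"
  have h1: "x^2 + y^2 = r^2" and h2: "x * v1 + y * v2 = p"
    using CC_common[of z c r c' r'] z unfolding x_def y_def v1_def v2_def p_def dd_def by auto
  have le: "p^2 \<le> r^2 * dd" using L1[of x v1 y v2] h1 h2 unfolding dd_def by simp
  show ?thesis
  proof (rule ccontr)
    assume "p^2 \<noteq> r^2 * dd"
    then have lt: "p^2 < (x^2+y^2) * dd" using le h1 by simp
    have dpos: "dd > 0"
    proof (rule ccontr)
      assume "\<not> dd > 0"
      then have "dd = 0" unfolding dd_def by (simp add: sum_power2_gt_zero_iff)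
      then show False using lt by simp
    qed
    note R = L3[OF dd_def[THEN meta_eq_to_obj_eq] dpos h2[symmetric] lt]
    define w where "w = Complex (Re c + (2 * p * v1/dd - x)) (Im c + (2 * p * v2/dd - y))"
    have "w \<in> SC c r"
      using R(1) h1 unfolding SC_def w_def by simp
    moreover have "w \<in> SC c' r'"
    proof -
      have "(2 * p * v1/dd - x)^2 + (2 * p * v2/dd - y)^2 = r^2" using R(1) h1 by simp
      then have "((2 * p * v1/dd - x) - v1)^2 + ((2 * p * v2/dd - y) - v2)^2 = r'^2"
        using R(2) unfolding p_def dd_def by (simp add: field_simps) algebra
      then show ?thesis unfolding SC_def w_def v1_def v2_def by (simp add: algebra_simps)
    qed
    moreover have "w \<noteq> z" using R(3) unfolding w_def x_def y_def by (auto simp: complex_eq_iff)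
    ultimately show False using un by blast
  qed
qed



definition SL :: "complex \<Rightarrow> real \<Rightarrow> complex set" where
  "SL h m = {z. Re z * Re h + Im z * Im h = m}"

lemma pts_L: "pts (Line h m) = insert None (Some ` SL h m)"
  by (simp add: SL_def dotc_def)

lemma CL_common:
  assumes "z \<in> SC c r" "z \<in> SL h m"
  shows "(Re z - Re c)^2 + (Im z - Im c)^2 = r^2"
    "(Re z - Re c) * Re h + (Im z - Im c) * Im h = m - (Re c * Re h + Im c * Im h)"
  using assms by (auto simp: SC_def SL_def algebra_simps)

lemma CL_nc:
  assumes h: "(Re h)^2 + (Im h)^2 = 1"
  and "(m - (Re c * Re h + Im c * Im h))^2 \<ge> r^2"
  shows "\<exists>z0. \<forall>z \<in> SC c r \<inter> SL h m. z = z0"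
proof -
  define p where "p = m - (Re c * Re h + Im c * Im h)"
  have "\<forall>z \<in> SC c r \<inter> SL h m. z = Complex (Re c + p * Re h / 1) (Im c + p * Im h / 1)"
  proof
    fix z assume z: "z \<in> SC c r \<inter> SL h m"
    define x where "x = Re z - Re c"
    define y where "y = Im z - Im c"
    have h1: "x^2 + y^2 = r^2" and h2: "x * Re h + y * Im h = p"
      using CL_common[of z c r h m] z unfolding x_def y_def p_def by auto
    have "p^2 \<le> r^2" using L1[of x "Re h" y "Im h"] h1 h2 h by simp
    then have "p^2 = (x^2+y^2) * 1" using assms(2) h1 unfolding p_def by simp
    then have "x = p * Re h / 1 \<and> y = p * Im h / 1" using L2[OF h[symmetric] _ h2[symmetric]] by simp
    then show "z = Complex (Re c + p * Re h / 1) (Im c + p * Im h / 1)"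
      unfolding x_def y_def by (simp add: complex_eq_iff)
  qed
  then show ?thesis by blast
qed

lemma CL_t:
  assumes h: "(Re h)^2 + (Im h)^2 = 1"
  and "\<exists>!z. z \<in> SC c r \<inter> SL h m"
  shows "(m - (Re c * Re h + Im c * Im h))^2 = r^2"
proof -
  define p where "p = m - (Re c * Re h + Im c * Im h)"
  obtain z where z: "z \<in> SC c r \<inter> SL h m" and un: "\<And>w. w \<in> SC c r \<inter> SL h m \<Longrightarrow> w = z"
    using assms(2) by blast
  define x where "x = Re z - Re c"
  define y where "y = Im z - Im c"
  have h1: "x^2 + y^2 = r^2" and h2: "x * Re h + y * Im h = p"
    using CL_common[of z c r h m] z unfolding x_def y_def p_def by auto
  have le: "p^2 \<le> r^2" using L1[of x "Re h" y "Im h"] h1 h2 h by simp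
  show ?thesis unfolding p_def[symmetric]
  proof (rule ccontr)
    assume "p^2 \<noteq> r^2"
    then have lt: "p^2 < (x^2+y^2) * 1" using le h1 by simp
    note R = L3[OF h[symmetric] _ h2[symmetric] lt, simplified]
    define w where "w = Complex (Re c + (2 * p * Re h - x)) (Im c + (2 * p * Im h - y))"
    have "w \<in> SC c r"
      using R(1) h1 unfolding SC_def w_def by simp
    moreover have "w \<in> SL h m"
      using R(2) unfolding SL_def w_def p_def by (simp add: algebra_simps)
    moreover have "w \<noteq> z" using R(3) unfolding w_def x_def y_def by (auto simp: complex_eq_iff)
    ultimately show False using un by blast
  qed
qed

lemma LL_nc:
  assumes h: "(Re h)^2 + (Im h)^2 = 1" and h': "(Re h')^2 + (Im h')^2 = 1"
  and s: "(Re h * Re h' + Im h * Im h')^2 \<ge> 1"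
  shows "SL h m = SL h' m' \<or> SL h m \<inter> SL h' m' = {}"
proof -
  define s where "s = Re h * Re h' + Im h * Im h'"
  have "s^2 \<le> 1" using L1[of "Re h'" "Re h" "Im h'" "Im h"] h h' unfolding s_def by (simp add: mult.commute)
  then have s2: "s^2 = 1" using s unfolding s_def by simp
  have "Re h' = s * Re h / 1 \<and> Im h' = s * Im h / 1"
    by (rule L2[OF h[symmetric]]) (use s2 h' in \<open>auto simp: s_def mult.commute\<close>)
  then have e: "Re h' = s * Re h" "Im h' = s * Im h" by auto
  have sn: "s \<noteq> 0" using s2 by auto
  have dz: "Re z * Re h' + Im z * Im h' = s * (Re z * Re h + Im z * Im h)" for z
    using e by (simp add: algebra_simps)
  show ?thesis
  proof (cases "m' = s * m")
    case True
    then have "SL h m = SL h' m'" unfolding SL_def using dz sn by auto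
    then show ?thesis by simp
  next
    case False
    then have "SL h m \<inter> SL h' m' = {}" unfolding SL_def using dz by auto
    then show ?thesis by simp
  qed
qed

lemma LL_t:
  assumes h: "(Re h)^2 + (Im h)^2 = 1" and h': "(Re h')^2 + (Im h')^2 = 1"
  and e: "SL h m \<inter> SL h' m' = {}"
  shows "(Re h * Re h' + Im h * Im h')^2 = 1"
proof -
  define s where "s = Re h * Re h' + Im h * Im h'"
  have le: "s^2 \<le> 1" using L1[of "Re h'" "Re h" "Im h'" "Im h"] h h' unfolding s_def by (simp add: mult.commute)
  show ?thesis unfolding s_def[symmetric]
  proof (rule ccontr)
    assume "s^2 \<noteq> 1"
    then have lt: "s^2 < 1" using le by simp
    define \<delta> where "\<delta> = Re h * Im h' - Im h * Re h'"
    have "\<delta>^2 = ((Re h)^2 + (Im h)^2) * ((Re h')^2 + (Im h')^2) - s^2"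
      unfolding \<delta>_def s_def by algebra
    then have "\<delta>^2 > 0" using h h' lt by simp
    then have dn: "\<delta> \<noteq> 0" by auto
    define w where "w = Complex ((m * Im h' - m' * Im h) / \<delta>) ((Re h * m' - Re h' * m) / \<delta>)"
    have rw: "Re w * \<delta> = m * Im h' - m' * Im h" "Im w * \<delta> = Re h * m' - Re h' * m"
      using dn by (simp_all add: w_def)
    have "(Re w * Re h + Im w * Im h) * \<delta> = (Re w * \<delta>) * Re h + (Im w * \<delta>) * Im h" by algebra
    also have "\<dots> = (m * Im h' - m' * Im h) * Re h + (Re h * m' - Re h' * m) * Im h" by (simp only: rw)
    also have "\<dots> = m * \<delta>" unfolding \<delta>_def by algebra
    finally have w1: "w \<in> SL h m" using dn unfolding SL_def by simp
    have "(Re w * Re h' + Im w * Im h') * \<delta> = (Re w * \<delta>) * Re h' + (Im w * \<delta>) * Im h'" by algebra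
    also have "\<dots> = (m * Im h' - m' * Im h) * Re h' + (Re h * m' - Re h' * m) * Im h'" by (simp only: rw)
    also have "\<dots> = m' * \<delta>" unfolding \<delta>_def by algebra
    finally have "w \<in> SL h' m'" using dn unfolding SL_def by simp
    then show False using w1 e by blast
  qed
qed



declare pts.simps[simp del]

definition conc :: "ecomplex set \<Rightarrow> ecomplex set \<Rightarrow> bool" where
  "conc A B \<longleftrightarrow> A = B \<or> (\<exists>!z. z \<in> A \<inter> B) \<or> A \<inter> B = {}"

lemma conc_sym: "conc A B \<Longrightarrow> conc B A"
  unfolding conc_def by (auto simp: Int_commute)

lemma some_int: "Some ` A \<inter> Some ` B = Some ` (A \<inter> B)" by auto

lemma some_CL: "Some ` A \<inter> insert None (Some ` B) = Some ` (A \<inter> B)" by auto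

lemma uniq_some: "(\<exists>!z. z \<in> Some ` X) \<longleftrightarrow> (\<exists>!z. z \<in> X)" by auto

lemma conc_some': assumes "\<exists>z0. \<forall>z \<in> X. z = z0" "A \<inter> B = Some ` X" shows "conc A B"
proof -
  obtain z0 where z0: "\<forall>z \<in> X. z = z0" using assms(1) by blast
  have sub: "A \<inter> B \<subseteq> {Some z0}" using z0 assms(2) by auto
  show ?thesis
  proof (cases "A \<inter> B = {}")
    case True then show ?thesis by (simp add: conc_def)
  next
    case False
    then have "A \<inter> B = {Some z0}" using sub by blast
    then have "\<exists>!z. z \<in> A \<inter> B" by simp
    then show ?thesis by (simp add: conc_def)
  qed
qed

lemma ipCC_rel:
  fixes c c' :: complex and r r' :: real
  assumes "r \<noteq> 0" "r' \<noteq> 0"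
  defines "v1 \<equiv> Re c' - Re c" and "v2 \<equiv> Im c' - Im c"
  defines "dd \<equiv> v1^2 + v2^2"
  defines "p \<equiv> (r^2 + dd - r'^2) / 2"
  shows "(r^2 * r'^2) * ((ip (acc (Circ c r)) (acc (Circ c' r')))^2 - 1) = p^2 - r^2 * dd"
proof -
  have "ip (acc (Circ c r)) (acc (Circ c' r')) = (r^2 + r'^2 - dd) / (2 * r * r')"
    using ip_CC[OF assms(1,2), of c c'] unfolding dd_def v1_def v2_def by simp
  then show ?thesis using assms(1,2) unfolding p_def
    by (simp add: field_simps power2_eq_square) algebra
qed

lemma rel_ge: "(a::real) > 0 \<Longrightarrow> a * (x - 1) = y \<Longrightarrow> (x \<ge> 1 \<longleftrightarrow> y \<ge> 0)"
  using zero_le_mult_iff[of a "x-1"] by auto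

lemma rel_eq: "(a::real) > 0 \<Longrightarrow> a * (x - 1) = y \<Longrightarrow> (x = 1 \<longleftrightarrow> y = 0)"
  by auto

lemma unit_h: "cmod h = 1 \<Longrightarrow> (Re h)^2 + (Im h)^2 = 1"
  using cmod_sq[of h] by simp

lemma nc_CL: "r \<noteq> 0 \<Longrightarrow> cmod h = 1 \<Longrightarrow> (ip (acc (Circ c r)) (acc (Line h m)))^2 \<ge> 1 \<Longrightarrow>
  conc (pts (Circ c r)) (pts (Line h m))"
proof -
  assume r: "r \<noteq> 0" and h: "cmod h = 1" and i: "(ip (acc (Circ c r)) (acc (Line h m)))^2 \<ge> 1"
  have "((Re c * Re h + Im c * Im h - m) / r)^2 \<ge> 1" using i ip_CL[OF r] by simp
  then have "(Re c * Re h + Im c * Im h - m)^2 \<ge> r^2" using r by (simp add: power_divide)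
  then have "(m - (Re c * Re h + Im c * Im h))^2 \<ge> r^2" by (simp add: power2_commute)
  from CL_nc[OF unit_h[OF h] this] show ?thesis
    by (intro conc_some') (simp_all add: pts_C pts_L some_CL)
qed

lemma t_CL: "r \<noteq> 0 \<Longrightarrow> cmod h = 1 \<Longrightarrow> tangent_oc (Circ c r) (Line h m) \<Longrightarrow>
  (ip (acc (Circ c r)) (acc (Line h m)))^2 = 1"
proof -
  assume r: "r \<noteq> 0" and h: "cmod h = 1" and t: "tangent_oc (Circ c r) (Line h m)"
  have "\<exists>!z. z \<in> SC c r \<inter> SL h m" using t unfolding tangent_oc_def pts_C pts_L some_CL uniq_some .
  from CL_t[OF unit_h[OF h] this] have "(Re c * Re h + Im c * Im h - m)^2 = r^2"
    by (simp add: power2_commute)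
  then show ?thesis using ip_CL[OF r] r by (simp add: power_divide)
qed

lemma geo_nc:
  assumes "valid_oc C" "valid_oc C'" "(ip (acc C) (acc C'))^2 \<ge> 1"
  shows "conc (pts C) (pts C')"
proof (cases C)
  case C: (Circ c r)
  show ?thesis
  proof (cases C')
    case C': (Circ c' r')
    have r: "r \<noteq> 0" "r' \<noteq> 0" using assms C C' by auto
    have "(Re c' - Re c)^2 + (Im c' - Im c)^2 \<ge> 0" by simp
    have pos: "r^2 * r'^2 > 0" using r by simp
    have "((r^2 + ((Re c' - Re c)^2 + (Im c' - Im c)^2) - r'^2) / 2)^2 - r^2 * ((Re c' - Re c)^2 + (Im c' - Im c)^2) \<ge> 0"
      using rel_ge[OF pos ipCC_rel[OF r, of c c']] assms(3) C C' by simp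
    then have "SC c r = SC c' r' \<or> (\<exists>z0. \<forall>z \<in> SC c r \<inter> SC c' r'. z = z0)"
      by (intro CC_nc) simp
    then show ?thesis
    proof
      assume "SC c r = SC c' r'" then show ?thesis using C C' by (simp add: conc_def pts_C)
    next
      assume "\<exists>z0. \<forall>z \<in> SC c r \<inter> SC c' r'. z = z0"
      then show ?thesis using C C' by (intro conc_some') (simp_all add: pts_C some_int)
    qed
  next
    case C': (Line h m)
    show ?thesis using nc_CL assms C C' by simp
  qed
next
  case C: (Line h m)
  show ?thesis
  proof (cases C')
    case C': (Circ c r)
    show ?thesis using nc_CL[of r h c m] assms C C' ip_sym conc_sym by simp
  next
    case C': (Line h' m')
    have u: "(Re h)^2 + (Im h)^2 = 1" "(Re h')^2 + (Im h')^2 = 1" using assms C C' unit_h by auto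
    have "SL h m = SL h' m' \<or> SL h m \<inter> SL h' m' = {}"
      using LL_nc[OF u] assms(3) C C' ip_LL by simp
    then show ?thesis using C C' by (auto simp: conc_def pts_L)
  qed
qed

lemma geo_t:
  assumes "valid_oc C" "valid_oc C'" "tangent_oc C C'"
  shows "(ip (acc C) (acc C'))^2 = 1"
proof (cases C)
  case C: (Circ c r)
  show ?thesis
  proof (cases C')
    case C': (Circ c' r')
    have r: "r \<noteq> 0" "r' \<noteq> 0" using assms C C' by auto
    have pos: "r^2 * r'^2 > 0" using r by simp
    have "tangent_oc (Circ c r) (Circ c' r')" using assms(3) C C' by simp
    then have "\<exists>!z. z \<in> SC c r \<inter> SC c' r'"
      unfolding tangent_oc_def pts_C some_int uniq_some .
    from CC_t[OF this] show ?thesis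
      using rel_eq[OF pos ipCC_rel[OF r, of c c']] C C' by simp
  next
    case C': (Line h m)
    show ?thesis using t_CL assms C C' by simp
  qed
next
  case C: (Line h m)
  show ?thesis
  proof (cases C')
    case C': (Circ c r)
    have "tangent_oc C' C" using assms(3) unfolding tangent_oc_def by (simp add: Int_commute)
    then show ?thesis using t_CL[of r h c m] assms C C' ip_sym by simp
  next
    case C': (Line h' m')
    have u: "(Re h)^2 + (Im h)^2 = 1" "(Re h')^2 + (Im h')^2 = 1" using assms C C' unit_h by auto
    have "tangent_oc (Line h m) (Line h' m')" using assms(3) C C' by simp
    then have "\<exists>!z. z \<in> insert None (Some ` SL h m) \<inter> insert None (Some ` SL h' m')"
      unfolding tangent_oc_def pts_L .
    then have "SL h m \<inter> SL h' m' = {}"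
    proof (intro equals0I)
      fix w assume u: "\<exists>!z. z \<in> insert None (Some ` SL h m) \<inter> insert None (Some ` SL h' m')"
        and w: "w \<in> SL h m \<inter> SL h' m'"
      have "Some w \<in> insert None (Some ` SL h m) \<inter> insert None (Some ` SL h' m')" using w by auto
      moreover have "None \<in> insert None (Some ` SL h m) \<inter> insert None (Some ` SL h' m')" by auto
      ultimately show False using u by (metis option.distinct(1))
    qed
    from LL_t[OF u this] show ?thesis using C C' ip_LL by simp
  qed
qed



lemma Wmat_row: "Wmat D $ k = acc (D k)" by (simp add: Wmat_def)

lemma odd_sq: assumes "((x::real) - 1) / 2 \<in> \<int>" shows "x^2 \<ge> 1"
proof -
  obtain n where n: "(x - 1) / 2 = of_int n" using assms Ints_cases by blast
  then have x: "x = of_int (2 * n + 1)" by (simp add: field_simps)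
  have "2 * n + 1 \<noteq> 0" by presburger
  then have "\<bar>2 * n + 1\<bar> \<ge> 1" by linarith
  then have "\<bar>x\<bar> \<ge> 1" unfolding x by (metis of_int_1_le_iff of_int_abs)
  then show ?thesis using abs_le_square_iff[of 1 x] by simp
qed

lemma desc_valid: "descartes D \<Longrightarrow> valid_oc (D i)"
  unfolding descartes_def by simp

lemma desc_tan: "descartes D \<Longrightarrow> i \<noteq> j \<Longrightarrow> tangent_oc (D i) (D j)"
  unfolding descartes_def by simp

lemma gram_odd:
  assumes "descartes D"
  shows "oddm (Wmat D ** Jm ** transpose (Wmat D))"
  unfolding oddm_def
proof (intro allI)
  fix i j
  have v: "\<And>i. valid_oc (D i)" using assms by (rule desc_valid)
  have e: "(Wmat D ** Jm ** transpose (Wmat D)) $ i $ j = ip (acc (D i)) (acc (D j))"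
    by (simp add: Jm_ip Wmat_row)
  have "ip (acc (D i)) (acc (D j)) = 1 \<or> ip (acc (D i)) (acc (D j)) = -1"
  proof (cases "i = j")
    case True then show ?thesis using ip_self v by simp
  next
    case False
    then have "tangent_oc (D i) (D j)" using assms desc_tan by blast
    then show ?thesis using geo_t[OF v v] by (simp add: power2_eq_1_iff)
  qed
  then show "((Wmat D ** Jm ** transpose (Wmat D)) $ i $ j - 1) / 2 \<in> \<int>"
    unfolding e by (auto simp: Ints_minus)
qed

theorem theorem5p1:
  assumes "descartes D"
  shows "\<forall>A \<in> packing_dual D. \<forall>B \<in> packing_dual D.
           A = B \<or> (\<exists>!z. z \<in> A \<inter> B) \<or> A \<inter> B = {}"
proof (intro ballI)
  fix A B assume A: "A \<in> packing_dual D" and B: "B \<in> packing_dual D"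
  obtain D1 k where A': "A = pts (D1 k)" "descartes D1" and U: "\<exists>U \<in> dual_apollonian. Wmat D1 = U ** Wmat D"
    using A unfolding packing_dual_def orbit_dual_def by blast
  obtain D2 l where B': "B = pts (D2 l)" "descartes D2" and V: "\<exists>V \<in> dual_apollonian. Wmat D2 = V ** Wmat D"
    using B unfolding packing_dual_def orbit_dual_def by blast
  obtain U where U: "U \<in> dual_apollonian" "Wmat D1 = U ** Wmat D" using U by blast
  obtain V where V: "V \<in> dual_apollonian" "Wmat D2 = V ** Wmat D" using V by blast
  have PU: "P U" using dual_Inv[OF U(1)] Inv_def by blast
  have PV: "P V" using dual_Inv[OF V(1)] Inv_def by blast
  define G where "G = Wmat D ** Jm ** transpose (Wmat D)"
  have "ip (acc (D1 k)) (acc (D2 l)) = (Wmat D1 ** Jm ** transpose (Wmat D2)) $ k $ l"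
    by (simp add: Jm_ip Wmat_row)
  also have "Wmat D1 ** Jm ** transpose (Wmat D2) = U ** G ** transpose V"
    unfolding U(2) V(2) G_def matrix_transpose_mul matrix_mul_assoc ..
  finally have e: "ip (acc (D1 k)) (acc (D2 l)) = (U ** G ** transpose V) $ k $ l" .
  have "oddm (U ** G ** transpose V)"
    using oddm_mult_P[OF P_oddm[OF PU gram_odd[OF assms, folded G_def]] P_transpose[OF PV]] .
  then have "((U ** G ** transpose V) $ k $ l - 1) / 2 \<in> \<int>" unfolding oddm_def by blast
  then have "(ip (acc (D1 k)) (acc (D2 l)))^2 \<ge> 1" unfolding e by (rule odd_sq)
  moreover have "valid_oc (D1 k)" "valid_oc (D2 l)" using desc_valid[OF A'(2)] desc_valid[OF B'(2)] by auto
  ultimately have "conc (pts (D1 k)) (pts (D2 l))" by (intro geo_nc)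
  then show "A = B \<or> (\<exists>!z. z \<in> A \<inter> B) \<or> A \<inter> B = {}" unfolding conc_def A'(1) B'(1) .
qed

end
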